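(* Let $0<x_{0}<x_{1}<\infty$, $g\in C^{1}[x_{0},x_{1}]$ with $g>0$ on $[x_{0},x_{1}]$, $w\in C[x_{0},x_{1}]$ with $w\ge0$ a.e., and $q\in L^{\infty}[x_{0},x_{1}]$ with $q\ge0$ a.e. On $H=L^{1}[x_{0},x_{1}]$ define $\mathcal{L}[p]=-(gp)'-wp$ with domain $\mathcal{D}(\mathcal{L})=\{\phi\in H:(g\phi)'\in H,\ (g\phi)(x_{0})=\int_{x_{0}}^{x_{1}}q(x)\phi(x)\,dx\}$. Then $\mathcal{L}$ has a compact resolvent, i.e. its resolvent set $\rho(\mathcal{L})$ is nonempty and $R(\lambda,\mathcal{L})$ is compact for all $\lambda\in\rho(\mathcal{L})$. *)

theory Defs
  imports "HOL-Analysis.Analysis"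
begin

text \<open>The space H = L^1[a,b] of complex-valued integrable functions, represented by
  functions real => complex that are Lebesgue integrable on [a,b]; elements of H are
  identified up to equality almost everywhere (predicate aeq).\<close>

definition L1 :: "real \<Rightarrow> real \<Rightarrow> (real \<Rightarrow> complex) set" where
  "L1 a b = {f. integrable (lebesgue_on {a..b}) f}"

definition L1norm :: "real \<Rightarrow> real \<Rightarrow> (real \<Rightarrow> complex) \<Rightarrow> real" where
  "L1norm a b f = integral\<^sup>L (lebesgue_on {a..b}) (\<lambda>x. norm (f x))"

definition aeq :: "real \<Rightarrow> real \<Rightarrow> (real \<Rightarrow> complex) \<Rightarrow> (real \<Rightarrow> complex) \<Rightarrow> bool" where
  "aeq a b f h \<longleftrightarrow> (AE x in lebesgue_on {a..b}. f x = h x)"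

text \<open>Graph of the operator  L[p] = -(g p)' - w p  with domain
  D(L) = {phi in H : (g phi)' in H, (g phi)(a) = int_a^b q phi}.
  "(g phi)' in H" means: g phi agrees a.e. with an absolutely continuous function,
  i.e. with  c + int_a^x psi  for some psi in H; then (g phi)' = psi and (g phi)(a) = c.
  The boundary condition fixes c = int_a^b q phi.
  opL_graph a b g w q phi chi  says  phi in D(L)  and  L[phi] = chi  (a.e.).\<close>

definition opL_graph ::
  "real \<Rightarrow> real \<Rightarrow> (real \<Rightarrow> real) \<Rightarrow> (real \<Rightarrow> real) \<Rightarrow> (real \<Rightarrow> real)
    \<Rightarrow> (real \<Rightarrow> complex) \<Rightarrow> (real \<Rightarrow> complex) \<Rightarrow> bool" where
  "opL_graph a b g w q \<phi> v \<longleftrightarrow>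
     \<phi> \<in> L1 a b \<and> v \<in> L1 a b \<and>
     (\<exists>\<psi> \<in> L1 a b.
        (AE x in lebesgue_on {a..b}.
           complex_of_real (g x) * \<phi> x =
             integral\<^sup>L (lebesgue_on {a..b}) (\<lambda>t. complex_of_real (q t) * \<phi> t)
             + integral\<^sup>L (lebesgue_on {a..x}) \<psi>) \<and>
        (AE x in lebesgue_on {a..b}. v x = - \<psi> x - complex_of_real (w x) * \<phi> x))"

definition shifted_injective ::
  "real \<Rightarrow> real \<Rightarrow> (real \<Rightarrow> real) \<Rightarrow> (real \<Rightarrow> real) \<Rightarrow> (real \<Rightarrow> real) \<Rightarrow> complex \<Rightarrow> bool" where
  "shifted_injective a b g w q \<mu> \<longleftrightarrow>
     (\<forall>\<phi>1 v1 \<phi>2 v2. opL_graph a b g w q \<phi>1 v1 \<and> opL_graph a b g w q \<phi>2 v2 \<and>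
        aeq a b (\<lambda>x. \<mu> * \<phi>1 x - v1 x) (\<lambda>x. \<mu> * \<phi>2 x - v2 x) \<longrightarrow> aeq a b \<phi>1 \<phi>2)"

definition resolvent_inverse ::
  "real \<Rightarrow> real \<Rightarrow> (real \<Rightarrow> real) \<Rightarrow> (real \<Rightarrow> real) \<Rightarrow> (real \<Rightarrow> real) \<Rightarrow> complex
     \<Rightarrow> ((real \<Rightarrow> complex) \<Rightarrow> (real \<Rightarrow> complex)) \<Rightarrow> bool" where
  "resolvent_inverse a b g w q \<mu> R \<longleftrightarrow>
     (\<forall>f \<in> L1 a b. \<exists>v. opL_graph a b g w q (R f) v \<and>
         aeq a b (\<lambda>x. \<mu> * R f x - v x) f)"

definition bounded_L1_map ::
  "real \<Rightarrow> real \<Rightarrow> ((real \<Rightarrow> complex) \<Rightarrow> (real \<Rightarrow> complex)) \<Rightarrow> bool" where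
  "bounded_L1_map a b R \<longleftrightarrow> (\<exists>C. \<forall>f \<in> L1 a b. L1norm a b (R f) \<le> C * L1norm a b f)"

definition resolvent_set ::
  "real \<Rightarrow> real \<Rightarrow> (real \<Rightarrow> real) \<Rightarrow> (real \<Rightarrow> real) \<Rightarrow> (real \<Rightarrow> real) \<Rightarrow> complex set" where
  "resolvent_set a b g w q =
     {\<mu>. shifted_injective a b g w q \<mu> \<and>
         (\<exists>R. resolvent_inverse a b g w q \<mu> R \<and> bounded_L1_map a b R)}"

definition compact_L1_map ::
  "real \<Rightarrow> real \<Rightarrow> ((real \<Rightarrow> complex) \<Rightarrow> (real \<Rightarrow> complex)) \<Rightarrow> bool" where
  "compact_L1_map a b R \<longleftrightarrow>
     (\<forall>(F :: nat \<Rightarrow> real \<Rightarrow> complex) B. (\<forall>n. F n \<in> L1 a b \<and> L1norm a b (F n) \<le> B) \<longrightarrow>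
        (\<exists>r h. strict_mono r \<and> h \<in> L1 a b \<and>
           (\<lambda>n. L1norm a b (\<lambda>x. R (F (r n)) x - h x)) \<longlonglongrightarrow> 0))"

end

theory Submission
  imports Defs "HOL-Probability.Helly_Selection"
begin


lemma V_eq:
  fixes f :: "real \<Rightarrow> 'a::euclidean_space"
  assumes "integrable (lebesgue_on {a..b}) f" "x \<le> b"
  shows "integral\<^sup>L (lebesgue_on {a..x}) f = integral {a..x} f"
proof -
  have "integrable (lebesgue_on {a..x}) f"
    using integrable_subinterval assms by (meson atLeastatMost_subset_iff order_refl)
  then show ?thesis by (simp add: lebesgue_integral_eq_integral)
qed

lemma countable_AE_lebesgue_on:
  assumes "countable A" "S \<in> sets lebesgue"
  shows "AE x in lebesgue_on S. x \<notin> A"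
proof -
  have "A \<in> null_sets lebesgue"
    using countable_imp_null_set_lborel[OF assms(1)] null_sets_completionI by blast
  then show ?thesis
    using null_sets_restrict_space[of S lebesgue "A \<inter> S"] assms(2)
    by (intro AE_I'[of "A \<inter> S"]) (auto intro: null_set_Int2)
qed

lemma helly_V:
  fixes p :: "nat \<Rightarrow> real \<Rightarrow> real"
  assumes ab: "a \<le> b" and int: "\<And>n. integrable (lebesgue_on {a..b}) (p n)"
    and nn: "\<And>n x. x \<in> {a..b} \<Longrightarrow> p n x \<ge> 0"
    and bd: "\<And>n. integral\<^sup>L (lebesgue_on {a..b}) (p n) \<le> K"
  shows "\<exists>r F. strict_mono r \<and> F \<in> borel_measurable borel \<and> (\<forall>x. \<bar>F x\<bar> \<le> K) \<and>
    (AE x in lebesgue_on {a..b}. (\<lambda>n. integral\<^sup>L (lebesgue_on {a..x}) (p (r n))) \<longlonglongrightarrow> F x)"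
proof -
  define C where "C x = max a (min x b)" for x
  have C: "C x \<in> {a..b}" for x using ab by (auto simp: C_def)
  have Cmono: "x \<le> y \<Longrightarrow> C x \<le> C y" for x y by (auto simp: C_def)
  have Ccont: "continuous_on UNIV C" unfolding C_def by (intro continuous_intros)
  have hk: "p n integrable_on {a..b}" for n by (simp add: int integrable_on_lebesgue_on)
  have hks: "p n integrable_on {a..x}" if "x \<le> b" for n x
    by (rule integrable_on_subinterval[OF hk]) (use that in auto)
  define m where "m n x = integral {a..C x} (p n)" for n x
  have mcont: "continuous_on UNIV (m n)" for n
  proof -
    have "continuous_on {a..b} (\<lambda>x. integral {a..x} (p n))"
      using hk by (rule indefinite_integral_continuous_1)
    then show ?thesis unfolding m_def
      using Ccont C by (intro continuous_on_compose2[of "{a..b}" "\<lambda>x. integral {a..x} (p n)" UNIV C]) auto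
  qed
  have rc: "continuous (at_right x) (m n)" for n x
    using mcont[of n] by (simp add: continuous_on_eq_continuous_within continuous_at_imp_continuous_at_within)
  have mm: "mono (m n)" for n
  proof
    fix x y :: real assume "x \<le> y"
    then show "m n x \<le> m n y" unfolding m_def
      using C[of x] C[of y] Cmono[of x y] nn
      by (intro integral_subset_le hks) auto
  qed
  have mb: "\<bar>m n x\<bar> \<le> K" for n x
  proof -
    have "0 \<le> m n x" unfolding m_def using C[of x] nn by (intro integral_nonneg hks) auto
    moreover have "m n x \<le> integral {a..b} (p n)" unfolding m_def
      using C[of x] nn by (intro integral_subset_le hks hk) auto
    moreover have "integral {a..b} (p n) = integral\<^sup>L (lebesgue_on {a..b}) (p n)"
      using int by (simp add: lebesgue_integral_eq_integral)
    ultimately show ?thesis using bd[of n] by auto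
  qed
  obtain s F where s: "strict_mono s" and Fr: "\<forall>x. continuous (at_right x) F" and Fm: "mono F"
    and Fb: "\<forall>x. \<bar>F x\<bar> \<le> K" and Fl: "\<forall>x. continuous (at x) F \<longrightarrow> (\<lambda>n. m (s n) x) \<longlonglongrightarrow> F x"
    using Helly_selection[of m K, OF rc mm mb] by blast
  have "AE x in lebesgue_on {a..b}. x \<notin> {x. \<not> isCont F x}"
    by (rule countable_AE_lebesgue_on) (use mono_ctble_discont[OF Fm] in auto)
  then have "AE x in lebesgue_on {a..b}. (\<lambda>n. integral\<^sup>L (lebesgue_on {a..x}) (p (s n))) \<longlonglongrightarrow> F x"
  proof (rule lebesgue_on_mono)
    fix x assume x: "x \<notin> {x. \<not> isCont F x}" "x \<in> {a..b}"
    have "m (s n) x = integral\<^sup>L (lebesgue_on {a..x}) (p (s n))" for n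
      using x(2) V_eq[OF int, of x "s n"] by (auto simp: m_def C_def)
    then show "(\<lambda>n. integral\<^sup>L (lebesgue_on {a..x}) (p (s n))) \<longlonglongrightarrow> F x"
      using Fl x(1) by auto
  qed
  then show ?thesis using s Fb borel_measurable_mono[OF Fm] by blast
qed

lemma helly_V_sub:
  fixes p :: "nat \<Rightarrow> real \<Rightarrow> real"
  assumes ab: "a \<le> b" and int: "\<And>n. integrable (lebesgue_on {a..b}) (p n)"
    and nn: "\<And>n x. x \<in> {a..b} \<Longrightarrow> p n x \<ge> 0"
    and bd: "\<And>n. integral\<^sup>L (lebesgue_on {a..b}) (p n) \<le> K"
    and s: "strict_mono (s::nat\<Rightarrow>nat)"
  shows "\<exists>r F. strict_mono r \<and> F \<in> borel_measurable borel \<and> (\<forall>x. \<bar>F x\<bar> \<le> K) \<and>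
    (AE x in lebesgue_on {a..b}. (\<lambda>n. integral\<^sup>L (lebesgue_on {a..x}) (p (s (r n)))) \<longlonglongrightarrow> F x)"
  using helly_V[of a b "\<lambda>n. p (s n)" K] assms by auto

lemma V_compact:
  fixes \<psi> :: "nat \<Rightarrow> real \<Rightarrow> complex"
  assumes ab: "a \<le> b" and int: "\<And>n. integrable (lebesgue_on {a..b}) (\<psi> n)"
    and bd: "\<And>n. integral\<^sup>L (lebesgue_on {a..b}) (\<lambda>x. norm (\<psi> n x)) \<le> K"
  shows "\<exists>r H. strict_mono r \<and> H \<in> borel_measurable borel \<and> (\<forall>x. norm (H x) \<le> 4 * K) \<and>
    (AE x in lebesgue_on {a..b}. (\<lambda>n. integral\<^sup>L (lebesgue_on {a..x}) (\<psi> (r n))) \<longlonglongrightarrow> H x)"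
proof -
  define p1 where "p1 n x = (\<bar>Re (\<psi> n x)\<bar> + Re (\<psi> n x)) / 2" for n x
  define p2 where "p2 n x = (\<bar>Re (\<psi> n x)\<bar> - Re (\<psi> n x)) / 2" for n x
  define p3 where "p3 n x = (\<bar>Im (\<psi> n x)\<bar> + Im (\<psi> n x)) / 2" for n x
  define p4 where "p4 n x = (\<bar>Im (\<psi> n x)\<bar> - Im (\<psi> n x)) / 2" for n x
  have iRe: "integrable (lebesgue_on {a..b}) (\<lambda>x. Re (\<psi> n x))" for n using int by auto
  have iIm: "integrable (lebesgue_on {a..b}) (\<lambda>x. Im (\<psi> n x))" for n using int by auto
  have i1: "integrable (lebesgue_on {a..b}) (p1 n)" for n unfolding p1_def using iRe[of n] by auto
  have i2: "integrable (lebesgue_on {a..b}) (p2 n)" for n unfolding p2_def using iRe[of n] by auto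
  have i3: "integrable (lebesgue_on {a..b}) (p3 n)" for n unfolding p3_def using iIm[of n] by auto
  have i4: "integrable (lebesgue_on {a..b}) (p4 n)" for n unfolding p4_def using iIm[of n] by auto
  have inorm: "integrable (lebesgue_on {a..b}) (\<lambda>x. norm (\<psi> n x))" for n using int by auto
  have n1: "p1 n x \<ge> 0" "p2 n x \<ge> 0" "p3 n x \<ge> 0" "p4 n x \<ge> 0" for n x
    by (auto simp: p1_def p2_def p3_def p4_def)
  have le1: "p1 n x \<le> norm (\<psi> n x)" "p2 n x \<le> norm (\<psi> n x)" "p3 n x \<le> norm (\<psi> n x)" "p4 n x \<le> norm (\<psi> n x)" for n x
    using abs_Re_le_cmod[of "\<psi> n x"] abs_Im_le_cmod[of "\<psi> n x"]
    by (auto simp: p1_def p2_def p3_def p4_def)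
  have b1: "integral\<^sup>L (lebesgue_on {a..b}) (p1 n) \<le> K" for n
    by (rule order.trans[OF integral_mono[OF i1 inorm] bd]) (use le1 in auto)
  have b2: "integral\<^sup>L (lebesgue_on {a..b}) (p2 n) \<le> K" for n
    by (rule order.trans[OF integral_mono[OF i2 inorm] bd]) (use le1 in auto)
  have b3: "integral\<^sup>L (lebesgue_on {a..b}) (p3 n) \<le> K" for n
    by (rule order.trans[OF integral_mono[OF i3 inorm] bd]) (use le1 in auto)
  have b4: "integral\<^sup>L (lebesgue_on {a..b}) (p4 n) \<le> K" for n
    by (rule order.trans[OF integral_mono[OF i4 inorm] bd]) (use le1 in auto)
  obtain r1 F1 where r1: "strict_mono r1" and F1: "F1 \<in> borel_measurable borel" "\<forall>x. \<bar>F1 x\<bar> \<le> K"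
    and L1: "AE x in lebesgue_on {a..b}. (\<lambda>n. integral\<^sup>L (lebesgue_on {a..x}) (p1 (id (r1 n)))) \<longlonglongrightarrow> F1 x"
    using helly_V_sub[of a b p1 K id, OF ab i1 _ b1] n1 by (auto simp: strict_mono_def)
  obtain r2 F2 where r2: "strict_mono r2" and F2: "F2 \<in> borel_measurable borel" "\<forall>x. \<bar>F2 x\<bar> \<le> K"
    and L2: "AE x in lebesgue_on {a..b}. (\<lambda>n. integral\<^sup>L (lebesgue_on {a..x}) (p2 (r1 (r2 n)))) \<longlonglongrightarrow> F2 x"
    using helly_V_sub[of a b p2 K r1, OF ab i2 _ b2 r1] n1 by auto
  obtain r3 F3 where r3: "strict_mono r3" and F3: "F3 \<in> borel_measurable borel" "\<forall>x. \<bar>F3 x\<bar> \<le> K"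
    and L3: "AE x in lebesgue_on {a..b}. (\<lambda>n. integral\<^sup>L (lebesgue_on {a..x}) (p3 ((r1 \<circ> r2) (r3 n)))) \<longlonglongrightarrow> F3 x"
    using helly_V_sub[of a b p3 K "r1 \<circ> r2", OF ab i3 _ b3 strict_mono_o[OF r1 r2]] n1 by blast
  obtain r4 F4 where r4: "strict_mono r4" and F4: "F4 \<in> borel_measurable borel" "\<forall>x. \<bar>F4 x\<bar> \<le> K"
    and L4: "AE x in lebesgue_on {a..b}. (\<lambda>n. integral\<^sup>L (lebesgue_on {a..x}) (p4 ((r1 \<circ> r2 \<circ> r3) (r4 n)))) \<longlonglongrightarrow> F4 x"
    using helly_V_sub[of a b p4 K "r1 \<circ> r2 \<circ> r3", OF ab i4 _ b4 strict_mono_o[OF strict_mono_o[OF r1 r2] r3]] n1 by blast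
  define r where "r = r1 \<circ> r2 \<circ> r3 \<circ> r4"
  have r: "strict_mono r" unfolding r_def by (intro strict_mono_o r1 r2 r3 r4)
  define H where "H x = complex_of_real (F1 x - F2 x) + \<i> * complex_of_real (F3 x - F4 x)" for x
  have Hm: "H \<in> borel_measurable borel" unfolding H_def using F1(1) F2(1) F3(1) F4(1) by simp
  have Hb: "norm (H x) \<le> 4 * K" for x
  proof -
    have "norm (H x) \<le> norm (complex_of_real (F1 x - F2 x)) + norm (\<i> * complex_of_real (F3 x - F4 x))"
      unfolding H_def by (rule norm_triangle_ineq)
    also have "\<dots> = \<bar>F1 x - F2 x\<bar> + \<bar>F3 x - F4 x\<bar>" by (simp add: norm_mult flip: of_real_diff)
    also have "\<dots> \<le> 4 * K" using F1(2) F2(2) F3(2) F4(2)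
      by (smt (verit) spec)
    finally show ?thesis .
  qed
  have L1': "AE x in lebesgue_on {a..b}. (\<lambda>n. integral\<^sup>L (lebesgue_on {a..x}) (p1 (r n))) \<longlonglongrightarrow> F1 x"
    using L1 by eventually_elim (drule LIMSEQ_subseq_LIMSEQ[OF _ strict_mono_o[OF r2 strict_mono_o[OF r3 r4]]], simp add: r_def o_def)
  have L2': "AE x in lebesgue_on {a..b}. (\<lambda>n. integral\<^sup>L (lebesgue_on {a..x}) (p2 (r n))) \<longlonglongrightarrow> F2 x"
    using L2 by eventually_elim (drule LIMSEQ_subseq_LIMSEQ[OF _ strict_mono_o[OF r3 r4]], simp add: r_def o_def)
  have L3': "AE x in lebesgue_on {a..b}. (\<lambda>n. integral\<^sup>L (lebesgue_on {a..x}) (p3 (r n))) \<longlonglongrightarrow> F3 x"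
    using L3 by eventually_elim (drule LIMSEQ_subseq_LIMSEQ[OF _ r4], simp add: r_def o_def)
  have "AE x in lebesgue_on {a..b}. (\<lambda>n. integral\<^sup>L (lebesgue_on {a..x}) (\<psi> (r n))) \<longlonglongrightarrow> H x"
    using L1' L2' L3' L4 AE_space
  proof eventually_elim
    case (elim x)
    have x: "x \<le> b" using elim(5) by simp
    have sub: "integrable (lebesgue_on {a..x}) f" if "integrable (lebesgue_on {a..b}) f" for f :: "real \<Rightarrow> real"
      using integrable_subinterval[OF that, of a x] x by auto
    have subc: "integrable (lebesgue_on {a..x}) (\<psi> n)" for n
      using integrable_subinterval[OF int, of a x] x by auto
    have eq: "integral\<^sup>L (lebesgue_on {a..x}) (\<psi> n) =
      complex_of_real (integral\<^sup>L (lebesgue_on {a..x}) (p1 n) - integral\<^sup>L (lebesgue_on {a..x}) (p2 n))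
      + \<i> * complex_of_real (integral\<^sup>L (lebesgue_on {a..x}) (p3 n) - integral\<^sup>L (lebesgue_on {a..x}) (p4 n))" for n
    proof -
      have "integral\<^sup>L (lebesgue_on {a..x}) (p1 n) - integral\<^sup>L (lebesgue_on {a..x}) (p2 n)
          = integral\<^sup>L (lebesgue_on {a..x}) (\<lambda>t. Re (\<psi> n t))"
      proof -
        have "(\<lambda>t. Re (\<psi> n t)) = (\<lambda>t. p1 n t - p2 n t)" by (auto simp: p1_def p2_def field_simps)
        then show ?thesis using Bochner_Integration.integral_diff[OF sub[OF i1] sub[OF i2]] by simp
      qed
      moreover have "integral\<^sup>L (lebesgue_on {a..x}) (p3 n) - integral\<^sup>L (lebesgue_on {a..x}) (p4 n)
          = integral\<^sup>L (lebesgue_on {a..x}) (\<lambda>t. Im (\<psi> n t))"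
      proof -
        have "(\<lambda>t. Im (\<psi> n t)) = (\<lambda>t. p3 n t - p4 n t)" by (auto simp: p3_def p4_def field_simps)
        then show ?thesis using Bochner_Integration.integral_diff[OF sub[OF i3] sub[OF i4]] by simp
      qed
      ultimately show ?thesis using subc[of n]
        by (simp add: complex_eq_iff)
    qed
    show ?case unfolding eq H_def
      by (intro tendsto_intros) (use elim in \<open>auto simp: r_def o_def\<close>)
  qed
  then show ?thesis using r Hm Hb by blast
qed

lemma V_bound:
  fixes \<psi> :: "real \<Rightarrow> complex"
  assumes int: "integrable (lebesgue_on {a..b}) \<psi>" and x: "x \<le> b"
  shows "norm (integral\<^sup>L (lebesgue_on {a..x}) \<psi>) \<le> integral\<^sup>L (lebesgue_on {a..b}) (\<lambda>t. norm (\<psi> t))"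
proof -
  have i: "integrable (lebesgue_on {a..b}) (\<lambda>t. norm (\<psi> t))" using int by auto
  have hk: "(\<lambda>t. norm (\<psi> t)) integrable_on {a..b}" using i by (simp add: integrable_on_lebesgue_on)
  have "norm (integral\<^sup>L (lebesgue_on {a..x}) \<psi>) \<le> integral\<^sup>L (lebesgue_on {a..x}) (\<lambda>t. norm (\<psi> t))"
    by (rule integral_norm_bound)
  also have "\<dots> = integral {a..x} (\<lambda>t. norm (\<psi> t))" using V_eq[OF i x] .
  also have "\<dots> \<le> integral {a..b} (\<lambda>t. norm (\<psi> t))"
    by (rule integral_subset_le) (use x hk in \<open>auto intro: integrable_on_subinterval[OF hk]\<close>)
  also have "\<dots> = integral\<^sup>L (lebesgue_on {a..b}) (\<lambda>t. norm (\<psi> t))"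
    using V_eq[OF i order_refl] by simp
  finally show ?thesis .
qed

lemma compact_core:
  fixes g :: "real \<Rightarrow> real" and \<phi> \<psi> :: "nat \<Rightarrow> real \<Rightarrow> complex" and c :: "nat \<Rightarrow> complex"
  assumes ab: "a \<le> b" and gc: "continuous_on {a..b} g" and gmin: "gm > 0" "\<And>x. x \<in> {a..b} \<Longrightarrow> g x \<ge> gm"
    and phi: "\<And>n. \<phi> n \<in> L1 a b" and psi: "\<And>n. \<psi> n \<in> L1 a b"
    and cb: "\<And>n. norm (c n) \<le> K" and psib: "\<And>n. L1norm a b (\<psi> n) \<le> K"
    and rep: "\<And>n. AE x in lebesgue_on {a..b}. complex_of_real (g x) * \<phi> n x = c n + integral\<^sup>L (lebesgue_on {a..x}) (\<psi> n)"
  shows "\<exists>r h. strict_mono r \<and> h \<in> L1 a b \<and> (\<lambda>n. L1norm a b (\<lambda>x. \<phi> (r n) x - h x)) \<longlonglongrightarrow> 0"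
proof -
  let ?M = "lebesgue_on {a..b}"
  have psi': "integrable ?M (\<psi> n)" for n using psi by (simp add: L1_def)
  have phi': "integrable ?M (\<phi> n)" for n using phi by (simp add: L1_def)
  obtain r1 H where r1: "strict_mono r1" and Hm: "H \<in> borel_measurable borel" and Hb: "\<forall>x. norm (H x) \<le> 4 * K"
    and HL: "AE x in ?M. (\<lambda>n. integral\<^sup>L (lebesgue_on {a..x}) (\<psi> (r1 n))) \<longlonglongrightarrow> H x"
    using V_compact[of a b \<psi> K, OF ab psi'] psib unfolding L1norm_def by blast
  have "bounded (range (\<lambda>n. c (r1 n)))" using cb by (auto simp: bounded_iff)
  then obtain c0 r2 where r2: "strict_mono r2" and cL: "((\<lambda>n. c (r1 n)) \<circ> r2) \<longlonglongrightarrow> c0"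
    using bounded_imp_convergent_subsequence by blast
  define r where "r = r1 \<circ> r2"
  have r: "strict_mono r" unfolding r_def by (intro strict_mono_o r1 r2)
  define h where "h x = (c0 + H x) / complex_of_real (g x)" for x
  have gm: "g \<in> borel_measurable ?M"
    using gc by (rule continuous_imp_measurable_on_sets_lebesgue) auto
  have hm: "h \<in> borel_measurable ?M" unfolding h_def
    using Hm gm by (intro borel_measurable_divide borel_measurable_add borel_measurable_const
       borel_measurable_of_real measurable_compose[OF _ Hm]) (auto intro: continuous_imp_measurable_on_sets_lebesgue continuous_on_id)
  have c0b: "norm c0 \<le> K"
  proof -
    have "(\<lambda>n. norm (((\<lambda>n. c (r1 n)) \<circ> r2) n)) \<longlonglongrightarrow> norm c0" using cL by (rule tendsto_norm)
    then show ?thesis using cb by (intro tendsto_upperbound[where F=sequentially]) (auto simp: o_def)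
  qed
  have Kpos: "K \<ge> 0" using cb[of 0] norm_ge_zero order.trans by blast
  have gpos: "x \<in> {a..b} \<Longrightarrow> g x > 0" for x using gmin by force
  have hb: "norm (h x) \<le> 5 * K / gm" if "x \<in> {a..b}" for x
  proof -
    have "norm (c0 + H x) \<le> 5 * K" using c0b Hb norm_triangle_ineq[of c0 "H x"] by (smt (verit))
    moreover have "norm (h x) = norm (c0 + H x) / g x" using gpos[OF that] by (simp add: h_def norm_divide)
    ultimately show ?thesis using gmin that Kpos
      by (smt (verit, best) divide_left_mono gpos mult_pos_pos frac_le)
  qed
  have fm: "finite_measure ?M" by (rule finite_measure_lebesgue_on) auto
  have hint: "integrable ?M h"
    by (rule finite_measure.integrable_const_bound[OF fm, where B="5 * K / gm"]) (use hb hm in auto)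
  have phib: "AE x in ?M. norm (\<phi> n x) \<le> 2 * K / gm" for n
    using rep[of n] AE_space
  proof eventually_elim
    case (elim x)
    have "norm (complex_of_real (g x) * \<phi> n x) \<le> 2 * K"
      using elim(1) cb[of n] V_bound[OF psi', of x n] psib[of n] norm_triangle_ineq elim(2)
      unfolding L1norm_def by (smt (verit) space_lebesgue_on atLeastAtMost_iff)
    then have "g x * norm (\<phi> n x) \<le> 2 * K" using gpos[of x] elim(2) by (simp add: norm_mult)
    then show ?case using gmin elim(2) Kpos
      by (smt (verit) divide_right_mono mult_right_mono nonzero_mult_div_cancel_left norm_ge_zero space_lebesgue_on)
  qed
  have repall: "AE x in ?M. \<forall>n. complex_of_real (g x) * \<phi> n x = c n + integral\<^sup>L (lebesgue_on {a..x}) (\<psi> n)"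
    using rep by (simp add: AE_all_countable)
  have conv: "AE x in ?M. (\<lambda>n. \<phi> (r n) x) \<longlonglongrightarrow> h x"
    using HL AE_space repall
  proof eventually_elim
    case (elim x)
    have gx: "g x > 0" using gpos elim(2) by simp
    have eq: "\<phi> (r n) x = (c (r n) + integral\<^sup>L (lebesgue_on {a..x}) (\<psi> (r n))) / complex_of_real (g x)" for n
      using elim(3)[rule_format, of "r n"] gx by (simp add: field_simps)
    have "(\<lambda>n. integral\<^sup>L (lebesgue_on {a..x}) (\<psi> (r n))) \<longlonglongrightarrow> H x"
      using LIMSEQ_subseq_LIMSEQ[OF elim(1) r2] by (simp add: r_def o_def)
    moreover have "(\<lambda>n. c (r n)) \<longlonglongrightarrow> c0" using cL by (simp add: r_def o_def)
    ultimately show ?case unfolding eq h_def using gx by (intro tendsto_intros) auto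
  qed
  have "(\<lambda>n. integral\<^sup>L ?M (\<lambda>x. norm (\<phi> (r n) x - h x))) \<longlonglongrightarrow> integral\<^sup>L ?M (\<lambda>x. 0::real)"
  proof (rule integral_dominated_convergence[where w="\<lambda>x. 2 * K / gm + 5 * K / gm"])
    show "(\<lambda>x. 0::real) \<in> borel_measurable ?M" by simp
    show "(\<lambda>x. norm (\<phi> (r n) x - h x)) \<in> borel_measurable ?M" for n
      using phi'[of "r n"] hm by measurable
    show "integrable ?M (\<lambda>x. 2 * K / gm + 5 * K / gm)" using fm by (simp add: finite_measure.integrable_const)
    show "AE x in ?M. (\<lambda>n. norm (\<phi> (r n) x - h x)) \<longlonglongrightarrow> 0"
      using conv by eventually_elim (simp add: tendsto_norm_zero LIM_zero)
    show "AE x in ?M. norm (norm (\<phi> (r n) x - h x)) \<le> 2 * K / gm + 5 * K / gm" for n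
      using phib[of "r n"] AE_space
    proof eventually_elim
      case (elim x)
      then show ?case using hb[of x] norm_triangle_ineq4[of "\<phi> (r n) x" "h x"] by auto
    qed
  qed
  then have "(\<lambda>n. L1norm a b (\<lambda>x. \<phi> (r n) x - h x)) \<longlonglongrightarrow> 0" by (simp add: L1norm_def)
  then show ?thesis using r hint by (auto simp: L1_def)
qed



lemma int_sub:
  fixes h :: "real \<Rightarrow> 'b::{banach, second_countable_topology}"
  assumes "a \<le> s" "t \<le> b"
  shows "integral\<^sup>L (lebesgue_on {s..t}) h = integral\<^sup>L (lebesgue_on {a..b}) (\<lambda>x. indicator {s..t} x *\<^sub>R h x)"
proof -
  have "integral\<^sup>L (lebesgue_on {a..b}) (\<lambda>x. indicator {s..t} x *\<^sub>R h x)
     = integral\<^sup>L lebesgue (\<lambda>x. indicator {a..b} x *\<^sub>R (indicator {s..t} x *\<^sub>R h x))"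
    by (rule integral_restrict_space) auto
  also have "\<dots> = integral\<^sup>L lebesgue (\<lambda>x. indicator {s..t} x *\<^sub>R h x)"
    using assms by (intro Bochner_Integration.integral_cong) (auto simp: indicator_def)
  also have "\<dots> = integral\<^sup>L (lebesgue_on {s..t}) h"
    by (rule integral_restrict_space[symmetric]) auto
  finally show ?thesis by simp
qed

lemma id_meas: "(\<lambda>x. x) \<in> borel_measurable (lebesgue_on {a..b::real})"
  by (rule continuous_imp_measurable_on_sets_lebesgue) (auto intro: continuous_on_id)

context
  fixes a b :: real and g w q k :: "real \<Rightarrow> real" and \<mu> Qb :: real
  assumes ab: "a < b"
    and gc: "continuous_on {a..b} g" and gpos: "\<And>x. x \<in> {a..b} \<Longrightarrow> g x > 0"
    and wc: "continuous_on {a..b} w"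
    and kdef: "\<And>x. k x = (\<mu> + w x) / g x"
    and kpos: "\<And>x. x \<in> {a..b} \<Longrightarrow> k x \<ge> 0"
    and qm: "q \<in> borel_measurable (lebesgue_on {a..b})"
    and qb: "AE x in lebesgue_on {a..b}. \<bar>q x\<bar> \<le> Qb"
    and qk: "AE x in lebesgue_on {a..b}. 0 \<le> q x / g x \<and> q x / g x \<le> k x / 2"
begin

lemma kc: "continuous_on {a..b} k"
proof -
  have "continuous_on {a..b} (\<lambda>x. (\<mu> + w x) / g x)"
    using gpos by (intro continuous_intros wc gc) force
  then show ?thesis using kdef by simp
qed

definition "A x = integral {a..x} k"
definition "e x = exp (- A x)"
definition "E x = exp (A x)"

lemma A_deriv: "x \<in> {a..b} \<Longrightarrow> (A has_real_derivative k x) (at x within {a..b})"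
  unfolding A_def has_real_derivative_iff_has_vector_derivative
  by (rule integral_has_vector_derivative[OF kc])

lemma A_cont: "continuous_on {a..b} A"
  unfolding A_def by (rule indefinite_integral_continuous_1) (rule integrable_continuous_real[OF kc])

lemma kint: "x \<le> b \<Longrightarrow> k integrable_on {s..x}" if "a \<le> s" for s x
  using integrable_continuous_real[OF kc] by (rule integrable_on_subinterval) (use that in auto)

lemma A_mono: "a \<le> x \<Longrightarrow> x \<le> y \<Longrightarrow> y \<le> b \<Longrightarrow> A x \<le> A y"
  unfolding A_def by (rule integral_subset_le) (use kint kpos in auto)

lemma A_nonneg: "x \<in> {a..b} \<Longrightarrow> A x \<ge> 0"
  unfolding A_def by (rule integral_nonneg) (use kint kpos in auto)

lemma e_cont: "continuous_on {a..b} e"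
  unfolding e_def by (intro continuous_intros A_cont)
lemma E_cont: "continuous_on {a..b} E"
  unfolding E_def by (intro continuous_intros A_cont)
lemma eE: "e x * E x = 1" by (simp add: e_def E_def exp_minus field_simps)

lemma e_FTC:
  assumes "a \<le> s" "s \<le> x" "x \<le> b"
  shows "integral\<^sup>L (lebesgue_on {s..x}) (\<lambda>t. k t * e t) = e s - e x"
proof -
  have c: "continuous_on {s..x} (\<lambda>t. k t * e t)"
    using assms by (intro continuous_intros continuous_on_subset[OF kc] continuous_on_subset[OF e_cont]) auto
  have "((\<lambda>t. k t * e t) has_integral ((\<lambda>t. - e t) x - (\<lambda>t. - e t) s)) {s..x}"
  proof (rule fundamental_theorem_of_calculus)
    fix t assume t: "t \<in> {s..x}"
    have "(A has_real_derivative k t) (at t within {s..x})"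
      using A_deriv[of t] assms t by (intro DERIV_subset[OF A_deriv]) auto
    then have "((\<lambda>t. - e t) has_real_derivative (k t * e t)) (at t within {s..x})"
      unfolding e_def by (auto intro!: derivative_eq_intros)
    then show "((\<lambda>t. - e t) has_vector_derivative (k t * e t)) (at t within {s..x})"
      by (simp add: has_real_derivative_iff_has_vector_derivative)
  qed (use assms in auto)
  then have "integral {s..x} (\<lambda>t. k t * e t) = e s - e x" by (simp add: integral_unique)
  moreover have "integral\<^sup>L (lebesgue_on {s..x}) (\<lambda>t. k t * e t) = integral {s..x} (\<lambda>t. k t * e t)"
    using c by (intro lebesgue_integral_eq_integral continuous_imp_integrable_real) auto
  ultimately show ?thesis by simp
qed

lemma kM: "k \<in> borel_measurable (lebesgue_on {a..b})"
  by (rule continuous_imp_measurable_on_sets_lebesgue[OF kc]) auto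
lemma eM: "e \<in> borel_measurable (lebesgue_on {a..b})"
  by (rule continuous_imp_measurable_on_sets_lebesgue[OF e_cont]) auto
lemma EM: "E \<in> borel_measurable (lebesgue_on {a..b})"
  by (rule continuous_imp_measurable_on_sets_lebesgue[OF E_cont]) auto

lemma e_le1: "x \<in> {a..b} \<Longrightarrow> e x \<le> 1" "e x > 0"
  using A_nonneg[of x] by (auto simp: e_def)
lemma E_bd: "x \<in> {a..b} \<Longrightarrow> E x \<le> E b" "E x > 0"
  using A_mono[of x b] by (auto simp: E_def)

lemma k_bd: obtains Kb where "\<And>x. x \<in> {a..b} \<Longrightarrow> k x \<le> Kb"
  using continuous_attains_sup[OF compact_Icc _ kc] ab by fastforce

lemma Ef_int:
  fixes f :: "real \<Rightarrow> complex"
  assumes fi: "integrable (lebesgue_on {a..b}) f"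
  shows "integrable (lebesgue_on {a..b}) (\<lambda>s. of_real (E s) * f s)"
proof (rule Bochner_Integration.integrable_bound[where f="\<lambda>s. of_real (E b) * f s"])
  show "integrable (lebesgue_on {a..b}) (\<lambda>s. of_real (E b) * f s)" using fi by simp
  show "(\<lambda>s. of_real (E s) * f s) \<in> borel_measurable (lebesgue_on {a..b})"
    using fi EM by measurable
  show "AE x in lebesgue_on {a..b}. norm (of_real (E x) * f x) \<le> norm (of_real (E b) * f x)"
    using E_bd by (intro AE_I2) (auto simp: norm_mult abs_of_pos E_bd(2) intro!: mult_right_mono E_bd(1))
qed

lemma claim:
  fixes f :: "real \<Rightarrow> complex"
  assumes fi: "integrable (lebesgue_on {a..b}) f" and x: "x \<in> {a..b}"
  shows "integral\<^sup>L (lebesgue_on {a..x}) (\<lambda>t. of_real (k t * e t) * integral\<^sup>L (lebesgue_on {a..t}) (\<lambda>s. of_real (E s) * f s))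
    = integral\<^sup>L (lebesgue_on {a..x}) f - of_real (e x) * integral\<^sup>L (lebesgue_on {a..x}) (\<lambda>s. of_real (E s) * f s)"
proof -
  let ?M = "lebesgue_on {a..b}"
  define FF where "FF t = integral\<^sup>L (lebesgue_on {a..t}) (\<lambda>s. of_real (E s) * f s)" for t
  interpret M: finite_measure ?M by (rule finite_measure_lebesgue_on) auto
  interpret P: pair_sigma_finite ?M ?M
    by (simp add: pair_sigma_finite_def M.sigma_finite_measure_axioms)
  obtain Kb where Kb: "\<And>x. x \<in> {a..b} \<Longrightarrow> k x \<le> Kb" using k_bd by blast
  define G where "G s t = (if s \<le> t \<and> t \<le> x then of_real (k t * e t * E s) * f s else 0)" for s t
  note [measurable] = kM eM EM id_meas
  have fM[measurable]: "f \<in> borel_measurable ?M" using fi by auto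
  have GM[measurable]: "case_prod G \<in> borel_measurable (?M \<Otimes>\<^sub>M ?M)"
    unfolding G_def by measurable
  have GMt[measurable]: "(\<lambda>t. G s t) \<in> borel_measurable ?M" for s
    unfolding G_def by measurable
  have Gb: "norm (G s t) \<le> Kb * E b * norm (f s)" if "s \<in> {a..b}" "t \<in> {a..b}" for s t
  proof -
    have "k t * e t * E s \<le> Kb * 1 * E b"
      using that Kb[of t] e_le1[of t] E_bd[of s] kpos[of t]
      by (intro mult_mono) (auto intro: mult_nonneg_nonneg less_imp_le)
    moreover have "0 \<le> k t * e t * E s" using that kpos[of t] e_le1 E_bd
      by (intro mult_nonneg_nonneg) (auto intro: less_imp_le)
    ultimately show ?thesis unfolding G_def
      by (auto simp: norm_mult intro!: mult_right_mono)
  qed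
  have Gint: "integrable (?M \<Otimes>\<^sub>M ?M) (case_prod G)"
  proof (rule P.Fubini_integrable)
    show "integrable ?M (\<lambda>s. \<integral>t. norm (case_prod G (s, t)) \<partial>?M)"
    proof (rule Bochner_Integration.integrable_bound[where f="\<lambda>s. of_real (Kb * E b * measure ?M {a..b}) * f s"])
      show "integrable ?M (\<lambda>s. of_real (Kb * E b * measure ?M {a..b}) * f s)" using fi by simp
      show "(\<lambda>s. \<integral>t. norm (case_prod G (s, t)) \<partial>?M) \<in> borel_measurable ?M" by measurable
      show "AE s in ?M. norm (\<integral>t. norm (case_prod G (s, t)) \<partial>?M) \<le> norm (of_real (Kb * E b * measure ?M {a..b}) * f s)"
      proof (rule AE_I2)
        fix s assume s: "s \<in> space ?M"
        have "norm (\<integral>t. norm (case_prod G (s, t)) \<partial>?M) = (\<integral>t. norm (G s t) \<partial>?M)"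
          by (simp add: integral_nonneg_AE)
        also have "\<dots> \<le> (\<integral>t. Kb * E b * norm (f s) \<partial>?M)"
          using s Gb by (intro integral_mono M.integrable_const_bound[where B="Kb * E b * norm (f s)"] AE_I2) (auto, meson norm_ge_zero order_trans atLeastAtMost_iff)
        also have "\<dots> = (Kb * E b * measure ?M {a..b}) * norm (f s)" by (simp add: mult_ac)
        also have "\<dots> \<le> \<bar>Kb\<bar> * \<bar>E b\<bar> * measure ?M {a..b} * norm (f s)"
        proof -
          have "Kb * E b \<le> \<bar>Kb\<bar> * \<bar>E b\<bar>" using abs_ge_self[of "Kb * E b"] by (simp add: abs_mult)
          then show ?thesis by (intro mult_right_mono norm_ge_zero) auto
        qed
        finally show "norm (\<integral>t. norm (case_prod G (s, t)) \<partial>?M) \<le> norm (of_real (Kb * E b * measure ?M {a..b}) * f s)"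
          by (simp add: norm_mult)
      qed
    qed
    show "AE s in ?M. integrable ?M (\<lambda>t. case_prod G (s, t))"
      using Gb by (intro AE_I2 M.integrable_const_bound[where B="Kb * E b * norm (f s)" for s]) auto
  qed (fact GM)
  define h where "h s = of_real (E s) * f s" for s
  have hi: "integrable ?M h" unfolding h_def by (rule Ef_int[OF fi])
  have xa: "a \<le> x" "x \<le> b" using x by auto
  have inner1: "(\<integral>s. G s t \<partial>?M) = indicator {a..x} t *\<^sub>R (of_real (k t * e t) * FF t)" if t: "t \<in> {a..b}" for t
  proof (cases "t \<le> x")
    case True
    have "(\<integral>s. G s t \<partial>?M) = (\<integral>s. of_real (k t * e t) * (indicator {a..t} s *\<^sub>R h s) \<partial>?M)"
      using True by (intro Bochner_Integration.integral_cong) (auto simp: G_def h_def indicator_def)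
    also have "\<dots> = of_real (k t * e t) * (\<integral>s. indicator {a..t} s *\<^sub>R h s \<partial>?M)"
      by (rule integral_mult_right_zero)
    also have "(\<integral>s. indicator {a..t} s *\<^sub>R h s \<partial>?M) = FF t"
      unfolding FF_def h_def using t by (intro int_sub[symmetric]) auto
    finally show ?thesis using True t by auto
  next
    case False
    then show ?thesis by (auto simp: G_def)
  qed
  have inner2: "(\<integral>t. G s t \<partial>?M) = indicator {a..x} s *\<^sub>R (f s - of_real (e x) * h s)" if s: "s \<in> {a..b}" for s
  proof (cases "s \<le> x")
    case True
    have "(\<integral>t. G s t \<partial>?M) = (\<integral>t. of_real (indicator {s..x} t *\<^sub>R (k t * e t)) * h s \<partial>?M)"
      by (intro Bochner_Integration.integral_cong) (auto simp: G_def h_def indicator_def)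
    also have "\<dots> = of_real (\<integral>t. indicator {s..x} t *\<^sub>R (k t * e t) \<partial>?M) * h s"
      by (subst integral_mult_left_zero, subst integral_complex_of_real, rule refl)
    also have "(\<integral>t. indicator {s..x} t *\<^sub>R (k t * e t) \<partial>?M) = e s - e x"
      using int_sub[of a s x b "\<lambda>t. k t * e t"] e_FTC[of s x] s True xa by auto
    finally show ?thesis using True s eE[of s]
      by (auto simp: h_def algebra_simps simp flip: of_real_mult)
  next
    case False
    then have "(\<lambda>t. G s t) = (\<lambda>t. 0)" by (auto simp: G_def intro!: ext)
    then show ?thesis using False by simp
  qed
  have "integral\<^sup>L (lebesgue_on {a..x}) (\<lambda>t. of_real (k t * e t) * FF t)
      = (\<integral>t. indicator {a..x} t *\<^sub>R (of_real (k t * e t) * FF t) \<partial>?M)"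
    using xa by (intro int_sub) auto
  also have "\<dots> = (\<integral>t. (\<integral>s. G s t \<partial>?M) \<partial>?M)"
    using inner1 by (intro Bochner_Integration.integral_cong) auto
  also have "\<dots> = (\<integral>s. (\<integral>t. G s t \<partial>?M) \<partial>?M)"
    using P.Fubini_integral[of G] Gint by simp
  also have "\<dots> = (\<integral>s. indicator {a..x} s *\<^sub>R (f s - of_real (e x) * h s) \<partial>?M)"
    using inner2 by (intro Bochner_Integration.integral_cong) auto
  also have "\<dots> = integral\<^sup>L (lebesgue_on {a..x}) (\<lambda>s. f s - of_real (e x) * h s)"
    using xa by (intro int_sub[symmetric]) auto
  also have "\<dots> = integral\<^sup>L (lebesgue_on {a..x}) f - of_real (e x) * integral\<^sup>L (lebesgue_on {a..x}) h"
  proof -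
    have "integrable (lebesgue_on {a..x}) f" "integrable (lebesgue_on {a..x}) h"
      using integrable_subinterval[OF fi, of a x] integrable_subinterval[OF hi, of a x] xa by auto
    then show ?thesis by simp
  qed
  finally show ?thesis unfolding FF_def h_def .
qed

lemma g_min: obtains gm where "gm > 0" "\<And>x. x \<in> {a..b} \<Longrightarrow> g x \<ge> gm"
proof -
  obtain x0 where "x0 \<in> {a..b}" "\<And>y. y \<in> {a..b} \<Longrightarrow> g x0 \<le> g y"
    using continuous_attains_inf[OF compact_Icc _ gc] ab by fastforce
  then show ?thesis using that[of "g x0"] gpos by blast
qed

lemma gM: "g \<in> borel_measurable (lebesgue_on {a..b})"
  by (rule continuous_imp_measurable_on_sets_lebesgue[OF gc]) auto

lemma A_a: "A a = 0" by (simp add: A_def)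
lemma e_a: "e a = 1" by (simp add: e_def A_a)
lemma E_a: "E a = 1" by (simp add: E_def A_a)

definition "r x = q x / g x * e x"
definition "gam = integral\<^sup>L (lebesgue_on {a..b}) r"

lemma rM: "r \<in> borel_measurable (lebesgue_on {a..b})"
  unfolding r_def using qm gM eM by measurable

lemma r_bd: "AE x in lebesgue_on {a..b}. 0 \<le> r x \<and> r x \<le> k x * e x / 2"
  using qk AE_space
proof eventually_elim
  case (elim x)
  then have x: "x \<in> {a..b}" by simp
  have h2: "q x / g x * e x \<le> k x / 2 * e x" using elim e_le1(2)[of x] by (intro mult_right_mono) auto
  have h1: "0 \<le> q x / g x * e x" by (rule mult_nonneg_nonneg) (use elim e_le1(2)[of x] in auto)
  show ?case unfolding r_def using h1 h2 by simp
qed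

lemma ke_cont: "continuous_on {a..b} (\<lambda>x. k x * e x)"
  by (intro continuous_intros kc e_cont)

lemma r_int: "integrable (lebesgue_on {a..b}) r"
proof -
  obtain Kb where Kb: "\<And>x. x \<in> {a..b} \<Longrightarrow> k x \<le> Kb" using k_bd by blast
  interpret M: finite_measure "lebesgue_on {a..b}" by (rule finite_measure_lebesgue_on) auto
  show ?thesis
  proof (rule M.integrable_const_bound[where B="Kb / 2"])
    show "AE x in lebesgue_on {a..b}. norm (r x) \<le> Kb / 2"
      using r_bd AE_space
    proof eventually_elim
      case (elim x)
      then have "k x * e x \<le> Kb * 1" using Kb[of x] e_le1[of x] kpos[of x]
        by (intro mult_mono) (auto intro: less_imp_le)
      then show ?case using elim by auto
    qed
  qed (rule rM)
qed

lemma gam_bd: "0 \<le> gam" "gam \<le> 1/2"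
proof -
  show "0 \<le> gam" unfolding gam_def using r_bd by (intro integral_nonneg_AE) auto
  have "gam \<le> integral\<^sup>L (lebesgue_on {a..b}) (\<lambda>x. k x * e x / 2)"
    unfolding gam_def using r_bd
    by (intro integral_mono_AE r_int continuous_imp_integrable_real continuous_intros kc e_cont) auto
  also have "\<dots> = (e a - e b) / 2" using e_FTC[of a b] ab by simp
  also have "\<dots> \<le> 1/2" using e_a e_le1(2)[of b] by simp
  finally show "gam \<le> 1/2" .
qed

definition "FF f t = integral\<^sup>L (lebesgue_on {a..t}) (\<lambda>s. complex_of_real (E s) * f s)"
definition "cc f = integral\<^sup>L (lebesgue_on {a..b}) (\<lambda>x. complex_of_real (r x) * FF f x) / complex_of_real (1 - gam)"
definition "Rop f x = complex_of_real (e x) * (cc f + FF f x) / complex_of_real (g x)"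

lemma FF_cont: "integrable (lebesgue_on {a..b}) f \<Longrightarrow> continuous_on {a..b} (FF f)"
  unfolding FF_def by (rule indefinite_integral_continuous_real[OF Ef_int])

lemma FF_bd:
  assumes fi: "integrable (lebesgue_on {a..b}) f" and t: "t \<in> {a..b}"
  shows "norm (FF f t) \<le> E b * L1norm a b f"
proof -
  have "norm (FF f t) \<le> integral\<^sup>L (lebesgue_on {a..b}) (\<lambda>s. norm (complex_of_real (E s) * f s))"
    unfolding FF_def using V_bound[OF Ef_int[OF fi], of t] t by auto
  also have "\<dots> \<le> integral\<^sup>L (lebesgue_on {a..b}) (\<lambda>s. E b * norm (f s))"
  proof (rule integral_mono)
    show "integrable (lebesgue_on {a..b}) (\<lambda>s. norm (complex_of_real (E s) * f s))"
      using Ef_int[OF fi] by (rule integrable_norm)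
    show "integrable (lebesgue_on {a..b}) (\<lambda>s. E b * norm (f s))"
      using fi by auto
    show "norm (complex_of_real (E s) * f s) \<le> E b * norm (f s)" if "s \<in> space (lebesgue_on {a..b})" for s
      using that E_bd[of s] by (auto simp: norm_mult abs_of_pos intro!: mult_right_mono)
  qed
  also have "\<dots> = E b * L1norm a b f" by (simp add: L1norm_def)
  finally show ?thesis .
qed

lemma g_ne: "x \<in> {a..b} \<Longrightarrow> g x \<noteq> 0" using gpos by force

lemma rFF_int:
  assumes fi: "integrable (lebesgue_on {a..b}) f"
  shows "integrable (lebesgue_on {a..b}) (\<lambda>x. complex_of_real (r x) * FF f x)"
proof (rule Bochner_Integration.integrable_bound[where f="\<lambda>x. complex_of_real (r x * E b * L1norm a b f)"])
  show "integrable (lebesgue_on {a..b}) (\<lambda>x. complex_of_real (r x * E b * L1norm a b f))"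
    using r_int by simp
  have "FF f \<in> borel_measurable (lebesgue_on {a..b})"
    by (rule continuous_imp_measurable_on_sets_lebesgue[OF FF_cont[OF fi]]) auto
  then show "(\<lambda>x. complex_of_real (r x) * FF f x) \<in> borel_measurable (lebesgue_on {a..b})"
    using rM by measurable
  have L: "L1norm a b f \<ge> 0" unfolding L1norm_def by (rule Bochner_Integration.integral_nonneg) auto
  show "AE x in lebesgue_on {a..b}. norm (complex_of_real (r x) * FF f x) \<le> norm (complex_of_real (r x * E b * L1norm a b f))"
    using r_bd AE_space
  proof eventually_elim
    case (elim x)
    have "\<bar>r x\<bar> * norm (FF f x) \<le> \<bar>r x\<bar> * (E b * L1norm a b f)"
      using FF_bd[OF fi, of x] elim by (intro mult_left_mono) auto
    then show ?case using elim E_bd(2)[of b] L by (simp add: norm_mult abs_mult)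
  qed
qed

lemma solve:
  assumes fL: "f \<in> L1 a b"
  shows "opL_graph a b g w q (Rop f) (\<lambda>x. complex_of_real \<mu> * Rop f x - f x) \<and>
         aeq a b (\<lambda>x. complex_of_real \<mu> * Rop f x - (complex_of_real \<mu> * Rop f x - f x)) f"
proof -
  let ?M = "lebesgue_on {a..b}"
  have fi: "integrable ?M f" using fL by (simp add: L1_def)
  define u where "u x = complex_of_real (e x) * (cc f + FF f x)" for x
  have FFc: "continuous_on {a..b} (FF f)" by (rule FF_cont[OF fi])
  have uc: "continuous_on {a..b} u" unfolding u_def
    by (intro continuous_intros e_cont FFc)
  have Rc: "continuous_on {a..b} (Rop f)" unfolding Rop_def
    using g_ne by (intro continuous_intros e_cont FFc gc) auto
  have Ri: "integrable ?M (Rop f)" by (rule continuous_imp_integrable_real[OF Rc])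
  define \<psi> where "\<psi> x = f x - complex_of_real (k x) * u x" for x
  have kuc: "continuous_on {a..b} (\<lambda>x. complex_of_real (k x) * u x)"
    by (intro continuous_intros kc uc)
  have \<psi>i: "integrable ?M \<psi>" unfolding \<psi>_def
    using fi continuous_imp_integrable_real[OF kuc] by auto
  have gR: "complex_of_real (g x) * Rop f x = u x" if "x \<in> {a..b}" for x
    using g_ne[OF that] by (simp add: Rop_def u_def)
  have T1: "integral\<^sup>L ?M (\<lambda>t. complex_of_real (q t) * Rop f t) = cc f * complex_of_real gam
        + integral\<^sup>L ?M (\<lambda>x. complex_of_real (r x) * FF f x)"
  proof -
    have "integral\<^sup>L ?M (\<lambda>t. complex_of_real (q t) * Rop f t)
        = integral\<^sup>L ?M (\<lambda>t. cc f * complex_of_real (r t) + complex_of_real (r t) * FF f t)"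
      by (intro Bochner_Integration.integral_cong) (auto simp: Rop_def r_def field_simps g_ne)
    also have "\<dots> = integral\<^sup>L ?M (\<lambda>t. cc f * complex_of_real (r t)) + integral\<^sup>L ?M (\<lambda>t. complex_of_real (r t) * FF f t)"
      using r_int rFF_int[OF fi] by (intro Bochner_Integration.integral_add) auto
    also have "integral\<^sup>L ?M (\<lambda>t. cc f * complex_of_real (r t)) = cc f * complex_of_real gam"
      by (simp add: gam_def)
    finally show ?thesis .
  qed
  have ccdef: "cc f * complex_of_real (1 - gam) = integral\<^sup>L ?M (\<lambda>x. complex_of_real (r x) * FF f x)"
    using gam_bd by (simp add: cc_def)
  have T2: "integral\<^sup>L (lebesgue_on {a..x}) \<psi> = integral\<^sup>L (lebesgue_on {a..x}) f
       - (cc f * complex_of_real (1 - e x) + (integral\<^sup>L (lebesgue_on {a..x}) f - complex_of_real (e x) * FF f x))"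
    if x: "x \<in> {a..b}" for x
  proof -
    have sub: "{a..x} \<subseteq> {a..b}" using x by auto
    have c1: "continuous_on {a..x} (\<lambda>t. complex_of_real (k t * e t))"
      by (intro continuous_on_subset[OF _ sub] continuous_intros kc e_cont)
    have c2: "continuous_on {a..x} (\<lambda>t. complex_of_real (k t * e t) * FF f t)"
      by (intro continuous_on_subset[OF _ sub] continuous_intros kc e_cont FFc)
    have i1: "integrable (lebesgue_on {a..x}) (\<lambda>t. cc f * complex_of_real (k t * e t))"
      using continuous_imp_integrable_real[OF c1] by simp
    have i2: "integrable (lebesgue_on {a..x}) (\<lambda>t. complex_of_real (k t * e t) * FF f t)"
      by (rule continuous_imp_integrable_real[OF c2])
    have fx: "integrable (lebesgue_on {a..x}) f" using integrable_subinterval[OF fi sub] .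
    have kux: "integrable (lebesgue_on {a..x}) (\<lambda>t. complex_of_real (k t) * u t)"
      using i1 i2 by (simp add: u_def algebra_simps)
    have "integral\<^sup>L (lebesgue_on {a..x}) \<psi> = integral\<^sup>L (lebesgue_on {a..x}) f - integral\<^sup>L (lebesgue_on {a..x}) (\<lambda>t. complex_of_real (k t) * u t)"
      unfolding \<psi>_def using fx kux by (rule Bochner_Integration.integral_diff)
    also have "integral\<^sup>L (lebesgue_on {a..x}) (\<lambda>t. complex_of_real (k t) * u t)
        = integral\<^sup>L (lebesgue_on {a..x}) (\<lambda>t. cc f * complex_of_real (k t * e t)) + integral\<^sup>L (lebesgue_on {a..x}) (\<lambda>t. complex_of_real (k t * e t) * FF f t)"
      by (subst Bochner_Integration.integral_add[OF i1 i2, symmetric]) (simp add: u_def algebra_simps)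
    also have "integral\<^sup>L (lebesgue_on {a..x}) (\<lambda>t. cc f * complex_of_real (k t * e t)) = cc f * complex_of_real (1 - e x)"
      using e_FTC[of a x] x e_a by (simp del: of_real_mult)
    also have "integral\<^sup>L (lebesgue_on {a..x}) (\<lambda>t. complex_of_real (k t * e t) * FF f t)
        = integral\<^sup>L (lebesgue_on {a..x}) f - complex_of_real (e x) * FF f x"
      unfolding FF_def by (rule claim[OF fi x])
    finally show ?thesis .
  qed
  have rep: "complex_of_real (g x) * Rop f x =
      integral\<^sup>L ?M (\<lambda>t. complex_of_real (q t) * Rop f t) + integral\<^sup>L (lebesgue_on {a..x}) \<psi>"
    if x: "x \<in> {a..b}" for x
  proof -
    have g1: "complex_of_real (1 - gam) \<noteq> 0" using gam_bd by simp
    show ?thesis unfolding gR[OF x] T1 T2[OF x] ccdef[symmetric]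
      by (simp add: u_def algebra_simps)
  qed
  have vrel: "complex_of_real \<mu> * Rop f x - f x = - \<psi> x - complex_of_real (w x) * Rop f x"
    if x: "x \<in> {a..b}" for x
    using g_ne[OF x] unfolding \<psi>_def u_def kdef Rop_def by (simp add: field_simps)
  have vi: "integrable ?M (\<lambda>x. complex_of_real \<mu> * Rop f x - f x)" using Ri fi by auto
  show ?thesis
    unfolding opL_graph_def aeq_def
  proof (intro conjI bexI[of _ \<psi>])
    show "Rop f \<in> L1 a b" using Ri by (simp add: L1_def)
    show "(\<lambda>x. complex_of_real \<mu> * Rop f x - f x) \<in> L1 a b" using vi by (simp add: L1_def)
    show "\<psi> \<in> L1 a b" using \<psi>i by (simp add: L1_def)
    show "AE x in ?M. complex_of_real (g x) * Rop f x =
      integral\<^sup>L ?M (\<lambda>t. complex_of_real (q t) * Rop f t) + integral\<^sup>L (lebesgue_on {a..x}) \<psi>"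
      using rep by (intro AE_I2) auto
    show "AE x in ?M. complex_of_real \<mu> * Rop f x - f x = - \<psi> x - complex_of_real (w x) * Rop f x"
      using vrel by (intro AE_I2) auto
  qed auto
qed

lemma L1norm_nonneg: "L1norm a b f \<ge> 0"
  unfolding L1norm_def by (rule Bochner_Integration.integral_nonneg) auto

lemma cc_bd:
  assumes fi: "integrable (lebesgue_on {a..b}) f"
  shows "norm (cc f) \<le> E b * L1norm a b f"
proof -
  let ?M = "lebesgue_on {a..b}"
  have "norm (integral\<^sup>L ?M (\<lambda>x. complex_of_real (r x) * FF f x)) \<le> integral\<^sup>L ?M (\<lambda>x. norm (complex_of_real (r x) * FF f x))"
    by (rule integral_norm_bound)
  also have "\<dots> \<le> integral\<^sup>L ?M (\<lambda>x. r x * (E b * L1norm a b f))"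
  proof (rule integral_mono_AE)
    show "integrable ?M (\<lambda>x. norm (complex_of_real (r x) * FF f x))" using rFF_int[OF fi] by auto
    show "integrable ?M (\<lambda>x. r x * (E b * L1norm a b f))" using r_int by auto
    show "AE x in ?M. norm (complex_of_real (r x) * FF f x) \<le> r x * (E b * L1norm a b f)"
      using r_bd AE_space
    proof eventually_elim
      case (elim x)
      then show ?case using FF_bd[OF fi, of x] by (auto simp: norm_mult intro!: mult_left_mono)
    qed
  qed
  also have "\<dots> = gam * (E b * L1norm a b f)" by (simp add: gam_def)
  finally have \<beta>: "norm (integral\<^sup>L ?M (\<lambda>x. complex_of_real (r x) * FF f x)) \<le> gam * (E b * L1norm a b f)" .
  have p: "0 \<le> E b * L1norm a b f" using E_bd(2)[of b] L1norm_nonneg by simp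
  have "norm (cc f) = norm (integral\<^sup>L ?M (\<lambda>x. complex_of_real (r x) * FF f x)) / (1 - gam)"
    unfolding cc_def norm_divide norm_of_real using gam_bd by (simp add: abs_of_nonneg)
  also have "\<dots> \<le> gam * (E b * L1norm a b f) / (1 - gam)"
    using \<beta> gam_bd by (intro divide_right_mono) auto
  also have "\<dots> \<le> E b * L1norm a b f"
  proof -
    have "E b * L1norm a b f * gam \<le> E b * L1norm a b f * (1 - gam)"
      using gam_bd p by (intro mult_left_mono) auto
    then have "gam * (E b * L1norm a b f) \<le> E b * L1norm a b f * (1 - gam)" by (simp add: mult.commute)
    then show ?thesis using gam_bd by (simp add: divide_le_eq)
  qed
  finally show ?thesis .
qed

lemma Rop_bounded: "\<exists>C. \<forall>f\<in>L1 a b. L1norm a b (Rop f) \<le> C * L1norm a b f"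
proof -
  obtain gm where gm: "gm > 0" "\<And>x. x \<in> {a..b} \<Longrightarrow> g x \<ge> gm" using g_min by blast
  interpret M: finite_measure "lebesgue_on {a..b}" by (rule finite_measure_lebesgue_on) auto
  have "L1norm a b (Rop f) \<le> (2 * E b / gm * measure (lebesgue_on {a..b}) {a..b}) * L1norm a b f" if f: "f \<in> L1 a b" for f
  proof -
    have fi: "integrable (lebesgue_on {a..b}) f" using f by (simp add: L1_def)
    let ?B = "2 * E b * L1norm a b f / gm"
    have pw: "norm (Rop f x) \<le> ?B" if x: "x \<in> {a..b}" for x
    proof -
      have n: "norm (cc f + FF f x) \<le> 2 * E b * L1norm a b f"
        using cc_bd[OF fi] FF_bd[OF fi x] norm_triangle_ineq[of "cc f" "FF f x"] by linarith
      have "norm (complex_of_real (e x) * (cc f + FF f x)) = e x * norm (cc f + FF f x)"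
        using e_le1(2)[of x] by (simp add: norm_mult)
      also have "\<dots> \<le> 1 * (2 * E b * L1norm a b f)"
        using e_le1(1)[OF x] e_le1(2)[of x] n by (intro mult_mono) auto
      finally have "norm (complex_of_real (e x) * (cc f + FF f x)) \<le> 2 * E b * L1norm a b f" by simp
      then have "norm (Rop f x) \<le> (2 * E b * L1norm a b f) / g x"
        using gpos[OF x] by (simp add: Rop_def norm_divide divide_right_mono)
      also have "\<dots> \<le> ?B"
        using gm gm(2)[OF x] E_bd(2)[of b] L1norm_nonneg[of f]
        by (intro divide_left_mono) auto
      finally show ?thesis .
    qed
    have "L1norm a b (Rop f) \<le> integral\<^sup>L (lebesgue_on {a..b}) (\<lambda>x. ?B)"
      unfolding L1norm_def[of a b "Rop f"] using pw
      by (intro integral_mono_AE AE_I2) (auto intro!: M.integrable_const_bound[where B="?B"] borel_measurable_norm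
          continuous_imp_measurable_on_sets_lebesgue continuous_intros e_cont gc FF_cont[OF fi]
          simp: Rop_def g_ne)
    also have "\<dots> = (2 * E b / gm * measure (lebesgue_on {a..b}) {a..b}) * L1norm a b f" by simp
    finally show ?thesis .
  qed
  then show ?thesis by blast
qed

lemma qphi_int:
  assumes "integrable (lebesgue_on {a..b}) \<phi>"
  shows "integrable (lebesgue_on {a..b}) (\<lambda>t. complex_of_real (q t) * \<phi> t)"
proof (rule Bochner_Integration.integrable_bound[where f="\<lambda>t. complex_of_real Qb * \<phi> t"])
  show "integrable (lebesgue_on {a..b}) (\<lambda>t. complex_of_real Qb * \<phi> t)" using assms by simp
  show "(\<lambda>t. complex_of_real (q t) * \<phi> t) \<in> borel_measurable (lebesgue_on {a..b})"
    using assms qm by measurable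
  show "AE x in lebesgue_on {a..b}. norm (complex_of_real (q x) * \<phi> x) \<le> norm (complex_of_real Qb * \<phi> x)"
    using qb by eventually_elim (auto simp: norm_mult intro!: mult_right_mono)
qed

lemma int_cong_sub:
  fixes f h :: "real \<Rightarrow> complex"
  assumes "f \<in> borel_measurable (lebesgue_on {a..b})" "h \<in> borel_measurable (lebesgue_on {a..b})"
    and "AE t in lebesgue_on {a..b}. f t = h t" and x: "x \<in> {a..b}"
  shows "integral\<^sup>L (lebesgue_on {a..x}) f = integral\<^sup>L (lebesgue_on {a..x}) h"
proof -
  note [measurable] = assms(1,2) id_meas
  have "integral\<^sup>L (lebesgue_on {a..x}) f = integral\<^sup>L (lebesgue_on {a..b}) (\<lambda>t. indicator {a..x} t *\<^sub>R f t)"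
    using x by (intro int_sub) auto
  also have "\<dots> = integral\<^sup>L (lebesgue_on {a..b}) (\<lambda>t. indicator {a..x} t *\<^sub>R h t)"
    using assms(3) by (intro integral_cong_AE) (measurable, auto)
  also have "\<dots> = integral\<^sup>L (lebesgue_on {a..x}) h"
    using x by (intro int_sub[symmetric]) auto
  finally show ?thesis .
qed

lemma inj: "shifted_injective a b g w q (complex_of_real \<mu>)"
  unfolding shifted_injective_def
proof (intro allI impI, elim conjE)
  let ?M = "lebesgue_on {a..b}"
  fix \<phi>1 v1 \<phi>2 v2
  assume G1: "opL_graph a b g w q \<phi>1 v1" and G2: "opL_graph a b g w q \<phi>2 v2"
    and eq: "aeq a b (\<lambda>x. complex_of_real \<mu> * \<phi>1 x - v1 x) (\<lambda>x. complex_of_real \<mu> * \<phi>2 x - v2 x)"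
  obtain \<psi>1 where p1: "integrable ?M \<phi>1" "integrable ?M \<psi>1"
    and R1: "AE x in ?M. complex_of_real (g x) * \<phi>1 x = integral\<^sup>L ?M (\<lambda>t. complex_of_real (q t) * \<phi>1 t) + integral\<^sup>L (lebesgue_on {a..x}) \<psi>1"
    and V1: "AE x in ?M. v1 x = - \<psi>1 x - complex_of_real (w x) * \<phi>1 x"
    using G1 unfolding opL_graph_def L1_def by auto
  obtain \<psi>2 where p2: "integrable ?M \<phi>2" "integrable ?M \<psi>2"
    and R2: "AE x in ?M. complex_of_real (g x) * \<phi>2 x = integral\<^sup>L ?M (\<lambda>t. complex_of_real (q t) * \<phi>2 t) + integral\<^sup>L (lebesgue_on {a..x}) \<psi>2"
    and V2: "AE x in ?M. v2 x = - \<psi>2 x - complex_of_real (w x) * \<phi>2 x"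
    using G2 unfolding opL_graph_def L1_def by auto
  define \<phi> where "\<phi> x = \<phi>1 x - \<phi>2 x" for x
  define \<psi> where "\<psi> x = \<psi>1 x - \<psi>2 x" for x
  define c where "c = integral\<^sup>L ?M (\<lambda>t. complex_of_real (q t) * \<phi>1 t) - integral\<^sup>L ?M (\<lambda>t. complex_of_real (q t) * \<phi>2 t)"
  define U where "U x = c + integral\<^sup>L (lebesgue_on {a..x}) \<psi>" for x
  have \<psi>i: "integrable ?M \<psi>" unfolding \<psi>_def using p1 p2 by auto
  have \<phi>i: "integrable ?M \<phi>" unfolding \<phi>_def using p1 p2 by auto
  have Udiff: "integral\<^sup>L (lebesgue_on {a..x}) \<psi> = integral\<^sup>L (lebesgue_on {a..x}) \<psi>1 - integral\<^sup>L (lebesgue_on {a..x}) \<psi>2"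
    if "x \<in> {a..b}" for x
    unfolding \<psi>_def using that
    by (intro Bochner_Integration.integral_diff integrable_subinterval[OF p1(2)] integrable_subinterval[OF p2(2)]) auto
  have AE1: "AE x in ?M. complex_of_real (g x) * \<phi> x = U x"
    using R1 R2 AE_space
  proof eventually_elim
    case (elim x)
    then show ?case unfolding \<phi>_def U_def c_def using Udiff[of x] by (simp add: algebra_simps)
  qed
  have Uc: "continuous_on {a..b} U"
    unfolding U_def by (intro continuous_intros indefinite_integral_continuous_real[OF \<psi>i])
  have UM[measurable]: "U \<in> borel_measurable ?M"
    by (rule continuous_imp_measurable_on_sets_lebesgue[OF Uc]) auto
  have kU: "continuous_on {a..b} (\<lambda>t. - complex_of_real (k t) * U t)"
    by (intro continuous_intros kc Uc)
  have AE2: "AE x in ?M. \<psi> x = - complex_of_real (k x) * U x"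
    using AE1 V1 V2 eq[unfolded aeq_def] AE_space
  proof eventually_elim
    case (elim x)
    have g0: "g x \<noteq> 0" using g_ne elim by simp
    have "\<psi> x = - (v1 x - v2 x) - complex_of_real (w x) * \<phi> x"
      using elim by (simp add: \<psi>_def \<phi>_def algebra_simps)
    also have "v1 x - v2 x = complex_of_real \<mu> * \<phi> x" using elim(4) by (simp add: \<phi>_def algebra_simps)
    finally have "\<psi> x = - (complex_of_real \<mu> + complex_of_real (w x)) * \<phi> x" by (simp add: algebra_simps)
    also have "\<dots> = - complex_of_real (k x) * (complex_of_real (g x) * \<phi> x)"
      using g0 by (simp add: kdef field_simps)
    finally show ?case using elim(1) by simp
  qed
  have Ueq: "U x = c - integral {a..x} (\<lambda>t. complex_of_real (k t) * U t)" if x: "x \<in> {a..b}" for x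
  proof -
    have "integral\<^sup>L (lebesgue_on {a..x}) \<psi> = integral\<^sup>L (lebesgue_on {a..x}) (\<lambda>t. - complex_of_real (k t) * U t)"
    proof (rule int_cong_sub[OF _ _ AE2 x])
      show "\<psi> \<in> borel_measurable ?M" using \<psi>i by auto
      show "(\<lambda>t. - complex_of_real (k t) * U t) \<in> borel_measurable ?M" using kM by measurable
    qed
    also have "\<dots> = integral {a..x} (\<lambda>t. - complex_of_real (k t) * U t)"
      using V_eq[OF continuous_imp_integrable_real[OF kU], of x] x by simp
    also have "\<dots> = - integral {a..x} (\<lambda>t. complex_of_real (k t) * U t)"
      by simp
    finally show ?thesis unfolding U_def by simp
  qed
  have kUc: "continuous_on {a..b} (\<lambda>t. complex_of_real (k t) * U t)" by (intro continuous_intros kc Uc)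
  have Uder: "(U has_vector_derivative (- (complex_of_real (k x) * U x))) (at x within {a..b})" if x: "x \<in> {a..b}" for x
  proof -
    have "((\<lambda>y. c - integral {a..y} (\<lambda>t. complex_of_real (k t) * U t)) has_vector_derivative (- (complex_of_real (k x) * U x))) (at x within {a..b})"
      using integral_has_vector_derivative[OF kUc x] by (auto intro!: derivative_eq_intros)
    note d = this
    show ?thesis
      by (rule has_vector_derivative_transform[OF x _ d]) (simp add: Ueq)
  qed
  have Ederiv: "(E has_real_derivative (E x * k x)) (at x within {a..b})" if x: "x \<in> {a..b}" for x
    unfolding E_def using A_deriv[OF x] by (auto intro!: derivative_eq_intros)
  obtain z where z: "\<And>x. x \<in> {a..b} \<Longrightarrow> E x *\<^sub>R U x = z"
  proof (rule has_vector_derivative_zero_constant[of "{a..b}" "\<lambda>x. E x *\<^sub>R U x"])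
    show "convex {a..b}" by simp
    fix x assume x: "x \<in> {a..b}"
    show "((\<lambda>x. E x *\<^sub>R U x) has_vector_derivative 0) (at x within {a..b})"
      using has_vector_derivative_scaleR[OF Ederiv[OF x] Uder[OF x]]
      by (simp add: scaleR_conv_of_real algebra_simps)
  qed auto
  have Ua: "U a = c"
    unfolding U_def using V_eq[OF \<psi>i, of a] ab by simp
  have Ux: "U x = c * complex_of_real (e x)" if x: "x \<in> {a..b}" for x
  proof -
    have "E x *\<^sub>R U x = E a *\<^sub>R U a" using z[OF x] z[of a] ab by auto
    then have "complex_of_real (E x) * U x = c" using Ua E_a by (simp add: scaleR_conv_of_real)
    then show ?thesis using eE[of x] E_bd(2)[of x]
      by (simp add: field_simps e_def E_def exp_minus)
  qed
  have "integral\<^sup>L ?M (\<lambda>t. complex_of_real (q t) * \<phi> t)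
      = integral\<^sup>L ?M (\<lambda>t. complex_of_real (q t) * \<phi>1 t - complex_of_real (q t) * \<phi>2 t)"
    unfolding \<phi>_def by (simp add: algebra_simps)
  also have "\<dots> = c" unfolding c_def
    by (rule Bochner_Integration.integral_diff[OF qphi_int[OF p1(1)] qphi_int[OF p2(1)]])
  finally have cq: "c = integral\<^sup>L ?M (\<lambda>t. complex_of_real (q t) * \<phi> t)" by simp
  also have "\<dots> = integral\<^sup>L ?M (\<lambda>t. c * complex_of_real (r t))"
  proof (rule integral_cong_AE)
    show "(\<lambda>t. complex_of_real (q t) * \<phi> t) \<in> borel_measurable ?M" using qphi_int[OF \<phi>i] by auto
    show "(\<lambda>t. c * complex_of_real (r t)) \<in> borel_measurable ?M" using rM by measurable
    show "AE x in ?M. complex_of_real (q x) * \<phi> x = c * complex_of_real (r x)"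
      using AE1 AE_space
    proof eventually_elim
      case (elim x)
      have g0: "g x \<noteq> 0" using g_ne elim by simp
      have "\<phi> x = U x / complex_of_real (g x)" using elim(1) g0 by (simp add: field_simps)
      then show ?case using Ux[of x] elim g0 by (simp add: r_def field_simps)
    qed
  qed
  also have "\<dots> = c * complex_of_real gam" by (simp add: gam_def)
  finally have "c * (1 - complex_of_real gam) = 0" by (simp add: algebra_simps)
  then have c0: "c = 0" using gam_bd by auto
  have "AE x in ?M. \<phi>1 x = \<phi>2 x"
    using AE1 AE_space
  proof eventually_elim
    case (elim x)
    then have "complex_of_real (g x) * \<phi> x = 0" using Ux[of x] c0 by simp
    then show ?case using g_ne[of x] elim by (simp add: \<phi>_def)
  qed
  then show "aeq a b \<phi>1 \<phi>2" by (simp add: aeq_def)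
qed

lemma in_resolvent: "complex_of_real \<mu> \<in> resolvent_set a b g w q"
  unfolding resolvent_set_def resolvent_inverse_def bounded_L1_map_def mem_Collect_eq
proof (intro conjI inj exI[of _ Rop] ballI)
  show "\<exists>C. \<forall>f\<in>L1 a b. L1norm a b (Rop f) \<le> C * L1norm a b f" by (rule Rop_bounded)
  fix f assume "f \<in> L1 a b"
  from solve[OF this] show "\<exists>v. opL_graph a b g w q (Rop f) v \<and> aeq a b (\<lambda>x. complex_of_real \<mu> * Rop f x - v x) f"
    by blast
qed

end


lemma qphi_int':
  fixes q :: "real \<Rightarrow> real"
  assumes qm: "q \<in> borel_measurable (lebesgue_on {a..b})"
    and qb: "AE x in lebesgue_on {a..b}. \<bar>q x\<bar> \<le> Qb"
    and "integrable (lebesgue_on {a..b}) \<phi>"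
  shows "integrable (lebesgue_on {a..b}) (\<lambda>t. complex_of_real (q t) * \<phi> t)"
proof (rule Bochner_Integration.integrable_bound[where f="\<lambda>t. complex_of_real Qb * \<phi> t"])
  show "integrable (lebesgue_on {a..b}) (\<lambda>t. complex_of_real Qb * \<phi> t)" using assms by simp
  show "(\<lambda>t. complex_of_real (q t) * \<phi> t) \<in> borel_measurable (lebesgue_on {a..b})"
    using assms qm by measurable
  show "AE x in lebesgue_on {a..b}. norm (complex_of_real (q x) * \<phi> x) \<le> norm (complex_of_real Qb * \<phi> x)"
    using qb by eventually_elim (auto simp: norm_mult intro!: mult_right_mono)
qed

lemma compact_part:
  fixes a b :: real and g w q :: "real \<Rightarrow> real" and \<mu> :: complex
  assumes ab: "a < b" and gc: "continuous_on {a..b} g" and gpos: "\<And>x. x \<in> {a..b} \<Longrightarrow> g x > 0"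
    and wc: "continuous_on {a..b} w"
    and qm: "q \<in> borel_measurable (lebesgue_on {a..b})"
    and qb: "AE x in lebesgue_on {a..b}. \<bar>q x\<bar> \<le> Qb"
    and mu: "\<mu> \<in> resolvent_set a b g w q" and R: "resolvent_inverse a b g w q \<mu> R"
  shows "compact_L1_map a b R"
  unfolding compact_L1_map_def
proof (intro allI impI)
  let ?M = "lebesgue_on {a..b}"
  fix F :: "nat \<Rightarrow> real \<Rightarrow> complex" and B :: real
  assume FB: "\<forall>n. F n \<in> L1 a b \<and> L1norm a b (F n) \<le> B"
  have inj: "shifted_injective a b g w q \<mu>" using mu by (simp add: resolvent_set_def)
  obtain R0 C where R0: "resolvent_inverse a b g w q \<mu> R0" and C: "\<And>f. f \<in> L1 a b \<Longrightarrow> L1norm a b (R0 f) \<le> C * L1norm a b f"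
    using mu by (auto simp: resolvent_set_def bounded_L1_map_def)
  have Fi: "integrable ?M (F n)" for n using FB by (simp add: L1_def)
  have L1nn: "L1norm a b f \<ge> 0" for f unfolding L1norm_def by (rule Bochner_Integration.integral_nonneg) auto
  have "\<forall>n. \<exists>vv. opL_graph a b g w q (R (F n)) vv \<and> aeq a b (\<lambda>x. \<mu> * R (F n) x - vv x) (F n)"
    using R FB unfolding resolvent_inverse_def by blast
  then obtain v where v: "\<And>n. opL_graph a b g w q (R (F n)) (v n) \<and> aeq a b (\<lambda>x. \<mu> * R (F n) x - v n x) (F n)"
    unfolding choice_iff by blast
  have "\<forall>n. \<exists>vv. opL_graph a b g w q (R0 (F n)) vv \<and> aeq a b (\<lambda>x. \<mu> * R0 (F n) x - vv x) (F n)"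
    using R0 FB unfolding resolvent_inverse_def by blast
  then obtain v0 where v0: "\<And>n. opL_graph a b g w q (R0 (F n)) (v0 n) \<and> aeq a b (\<lambda>x. \<mu> * R0 (F n) x - v0 n x) (F n)"
    unfolding choice_iff by blast
  have same: "aeq a b (R (F n)) (R0 (F n))" for n
  proof -
    have "aeq a b (\<lambda>x. \<mu> * R (F n) x - v n x) (\<lambda>x. \<mu> * R0 (F n) x - v0 n x)"
      using conjunct2[OF v[of n]] conjunct2[OF v0[of n]] unfolding aeq_def by eventually_elim simp
    then show ?thesis using inj v[of n] v0[of n] unfolding shifted_injective_def by blast
  qed
  have phiB: "L1norm a b (R (F n)) \<le> \<bar>C\<bar> * B" for n
  proof -
    have "L1norm a b (R (F n)) = L1norm a b (R0 (F n))"
      unfolding L1norm_def using same[of n] unfolding aeq_def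
      by (intro integral_cong_AE) (use v[of n] v0[of n] in \<open>auto simp: opL_graph_def L1_def\<close>)
    also have "\<dots> \<le> C * L1norm a b (F n)" using C FB by auto
    also have "\<dots> \<le> \<bar>C\<bar> * L1norm a b (F n)" by (intro mult_right_mono abs_ge_self L1nn)
    also have "\<dots> \<le> \<bar>C\<bar> * B" using FB by (intro mult_left_mono) auto
    finally show ?thesis .
  qed
  obtain W where W: "\<And>x. x \<in> {a..b} \<Longrightarrow> \<bar>w x\<bar> \<le> W"
  proof -
    obtain x1 where "x1 \<in> {a..b}" "\<And>y. y \<in> {a..b} \<Longrightarrow> \<bar>w y\<bar> \<le> \<bar>w x1\<bar>"
      using continuous_attains_sup[OF compact_Icc _ continuous_on_rabs[OF wc]] ab by fastforce
    then show ?thesis using that by blast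
  qed
  have "\<forall>n. \<exists>\<psi>\<in>L1 a b.
        (AE x in ?M. complex_of_real (g x) * R (F n) x =
             integral\<^sup>L ?M (\<lambda>t. complex_of_real (q t) * R (F n) t) + integral\<^sup>L (lebesgue_on {a..x}) \<psi>) \<and>
        (AE x in ?M. v n x = - \<psi> x - complex_of_real (w x) * R (F n) x)"
    using v unfolding opL_graph_def by blast
  then obtain \<psi> where \<psi>: "\<And>n. \<psi> n \<in> L1 a b"
    and rep: "\<And>n. AE x in ?M. complex_of_real (g x) * R (F n) x =
             integral\<^sup>L ?M (\<lambda>t. complex_of_real (q t) * R (F n) t) + integral\<^sup>L (lebesgue_on {a..x}) (\<psi> n)"
    and V: "\<And>n. AE x in ?M. v n x = - \<psi> n x - complex_of_real (w x) * R (F n) x"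
    unfolding choice_iff Bex_def by blast
  have phi: "R (F n) \<in> L1 a b" for n using v[of n] by (simp add: opL_graph_def)
  have phii: "integrable ?M (R (F n))" for n using phi by (simp add: L1_def)
  have psii: "integrable ?M (\<psi> n)" for n using \<psi> by (simp add: L1_def)
  define K where "K = B + (cmod \<mu> + W) * \<bar>C\<bar> * B + \<bar>Qb\<bar> * \<bar>C\<bar> * B"
  have B0: "B \<ge> 0" using FB L1nn[of "F 0"] by (meson order_trans)
  have W0: "W \<ge> 0" using W[of a] ab by (meson abs_ge_zero atLeastAtMost_iff less_imp_le order_refl order_trans)
  have psib: "L1norm a b (\<psi> n) \<le> K" for n
  proof -
    have "L1norm a b (\<psi> n) \<le> integral\<^sup>L ?M (\<lambda>x. norm (F n x) + (cmod \<mu> + W) * norm (R (F n) x))"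
      unfolding L1norm_def
    proof (rule integral_mono_AE)
      show "integrable ?M (\<lambda>x. norm (\<psi> n x))" using psii by auto
      show "integrable ?M (\<lambda>x. norm (F n x) + (cmod \<mu> + W) * norm (R (F n) x))" using Fi phii by auto
      show "AE x in ?M. norm (\<psi> n x) \<le> norm (F n x) + (cmod \<mu> + W) * norm (R (F n) x)"
        using V[of n] conjunct2[OF v[of n], unfolded aeq_def] AE_space
      proof eventually_elim
        case (elim x)
        have Fe: "F n x = \<mu> * R (F n) x - v n x" using elim(2) by simp
        have ps: "\<psi> n x = F n x - \<mu> * R (F n) x - complex_of_real (w x) * R (F n) x"
          unfolding Fe elim(1) by (simp add: algebra_simps)
        have "norm (\<psi> n x) \<le> norm (F n x) + norm (\<mu> * R (F n) x) + norm (complex_of_real (w x) * R (F n) x)"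
          unfolding ps by (smt (verit) norm_triangle_ineq4)
        also have "\<dots> \<le> norm (F n x) + cmod \<mu> * norm (R (F n) x) + W * norm (R (F n) x)"
          using W[of x] elim by (auto simp: norm_mult intro!: mult_right_mono)
        finally show ?case by (simp add: algebra_simps)
      qed
    qed
    also have "\<dots> = L1norm a b (F n) + (cmod \<mu> + W) * L1norm a b (R (F n))"
      unfolding L1norm_def using Fi phii by (simp add: Bochner_Integration.integral_add)
    also have "\<dots> \<le> B + (cmod \<mu> + W) * (\<bar>C\<bar> * B)"
      using FB phiB[of n] W0 by (intro add_mono mult_left_mono) auto
    also have "\<dots> \<le> K" unfolding K_def using B0 by (simp add: mult.assoc)
    finally show ?thesis .
  qed
  have cb: "norm (integral\<^sup>L ?M (\<lambda>t. complex_of_real (q t) * R (F n) t)) \<le> K" for n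
  proof -
    have "norm (integral\<^sup>L ?M (\<lambda>t. complex_of_real (q t) * R (F n) t)) \<le> integral\<^sup>L ?M (\<lambda>t. norm (complex_of_real (q t) * R (F n) t))"
      by (rule integral_norm_bound)
    also have "\<dots> \<le> integral\<^sup>L ?M (\<lambda>t. \<bar>Qb\<bar> * norm (R (F n) t))"
    proof (rule integral_mono_AE)
      show "integrable ?M (\<lambda>t. norm (complex_of_real (q t) * R (F n) t))"
        using qphi_int'[OF qm qb phii] by auto
      show "integrable ?M (\<lambda>t. \<bar>Qb\<bar> * norm (R (F n) t))" using phii by auto
      show "AE t in ?M. norm (complex_of_real (q t) * R (F n) t) \<le> \<bar>Qb\<bar> * norm (R (F n) t)"
        using qb by eventually_elim (auto simp: norm_mult intro!: mult_right_mono)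
    qed
    also have "\<dots> = \<bar>Qb\<bar> * L1norm a b (R (F n))" by (simp add: L1norm_def)
    also have "\<dots> \<le> \<bar>Qb\<bar> * (\<bar>C\<bar> * B)" using phiB[of n] by (intro mult_left_mono) auto
    also have "\<dots> \<le> K" unfolding K_def using B0 W0
      by (simp add: mult.assoc)
    finally show ?thesis .
  qed
  obtain gm where gm: "gm > 0" "\<And>x. x \<in> {a..b} \<Longrightarrow> g x \<ge> gm"
  proof -
    obtain x0 where "x0 \<in> {a..b}" "\<And>y. y \<in> {a..b} \<Longrightarrow> g x0 \<le> g y"
      using continuous_attains_inf[OF compact_Icc _ gc] ab by fastforce
    then show ?thesis using that[of "g x0"] gpos by blast
  qed
  show "\<exists>r h. strict_mono r \<and> h \<in> L1 a b \<and> (\<lambda>n. L1norm a b (\<lambda>x. R (F (r n)) x - h x)) \<longlonglongrightarrow> 0"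
    using compact_core[of a b g gm "\<lambda>n. R (F n)" \<psi> "\<lambda>n. integral\<^sup>L ?M (\<lambda>t. complex_of_real (q t) * R (F n) t)" K,
        OF _ gc gm phi \<psi> cb psib rep] ab by auto
qed

theorem proposition6:
  fixes x0 x1 :: real and g w q :: "real \<Rightarrow> real"
  assumes "0 < x0" and "x0 < x1"
    and "\<exists>g'. continuous_on {x0..x1} g' \<and>
           (\<forall>x\<in>{x0..x1}. (g has_real_derivative g' x) (at x within {x0..x1}))"
    and "\<forall>x\<in>{x0..x1}. g x > 0"
    and "continuous_on {x0..x1} w"
    and "AE x in lebesgue_on {x0..x1}. w x \<ge> 0"
    and "q \<in> borel_measurable (lebesgue_on {x0..x1})"
    and "\<exists>B. AE x in lebesgue_on {x0..x1}. \<bar>q x\<bar> \<le> B"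
    and "AE x in lebesgue_on {x0..x1}. q x \<ge> 0"
  shows "resolvent_set x0 x1 g w q \<noteq> {} \<and>
         (\<forall>\<mu> \<in> resolvent_set x0 x1 g w q. \<forall>R.
            resolvent_inverse x0 x1 g w q \<mu> R \<longrightarrow> compact_L1_map x0 x1 R)"
proof -
  note ab = assms(2)
  have gc: "continuous_on {x0..x1} g"
  proof -
    obtain g' where "\<forall>x\<in>{x0..x1}. (g has_real_derivative g' x) (at x within {x0..x1})" using assms(3) by blast
    then show ?thesis
      by (auto simp: continuous_on_eq_continuous_within intro: DERIV_continuous)
  qed
  have gpos: "\<And>x. x \<in> {x0..x1} \<Longrightarrow> g x > 0" using assms(4) by blast
  note wc = assms(5) and qm = assms(7)
  obtain Qb0 where Qb0: "AE x in lebesgue_on {x0..x1}. \<bar>q x\<bar> \<le> Qb0" using assms(8) by blast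
  define Qb where "Qb = max Qb0 0"
  have qb: "AE x in lebesgue_on {x0..x1}. \<bar>q x\<bar> \<le> Qb" using Qb0 by eventually_elim (simp add: Qb_def)
  have Qb0': "Qb \<ge> 0" by (simp add: Qb_def)
  obtain gm where gm: "gm > 0" "\<And>x. x \<in> {x0..x1} \<Longrightarrow> g x \<ge> gm"
  proof -
    obtain y where "y \<in> {x0..x1}" "\<And>z. z \<in> {x0..x1} \<Longrightarrow> g y \<le> g z"
      using continuous_attains_inf[OF compact_Icc _ gc] ab by fastforce
    then show ?thesis using that[of "g y"] gpos by blast
  qed
  obtain gM where gM: "\<And>x. x \<in> {x0..x1} \<Longrightarrow> g x \<le> gM"
    using continuous_attains_sup[OF compact_Icc _ gc] ab by fastforce
  have gMpos: "gM > 0" using gM[of x0] gpos[of x0] ab by force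
  obtain W where W: "\<And>x. x \<in> {x0..x1} \<Longrightarrow> \<bar>w x\<bar> \<le> W"
  proof -
    obtain y where "y \<in> {x0..x1}" "\<And>z. z \<in> {x0..x1} \<Longrightarrow> \<bar>w z\<bar> \<le> \<bar>w y\<bar>"
      using continuous_attains_sup[OF compact_Icc _ continuous_on_rabs[OF wc]] ab by fastforce
    then show ?thesis using that by blast
  qed
  define \<mu> where "\<mu> = W + 2 * Qb * gM / gm + 1"
  define k where "k x = (\<mu> + w x) / g x" for x
  have num: "\<mu> + w x \<ge> 2 * Qb * gM / gm + 1" if x: "x \<in> {x0..x1}" for x
    using W[OF x] by (simp add: \<mu>_def)
  have Q2: "2 * Qb * gM / gm \<ge> 0" using Qb0' gm gMpos by simp
  have kpos: "k x \<ge> 0" if x: "x \<in> {x0..x1}" for x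
    using num[OF x] Q2 gpos[OF x] by (simp add: k_def)
  have klow: "k x \<ge> 2 * Qb / gm" if x: "x \<in> {x0..x1}" for x
  proof -
    have "k x \<ge> (2 * Qb * gM / gm + 1) / g x"
      unfolding k_def using num[OF x] gpos[OF x] by (intro divide_right_mono) auto
    also have "(2 * Qb * gM / gm + 1) / g x \<ge> (2 * Qb * gM / gm + 1) / gM"
      using gpos[OF x] gM[OF x] Q2 by (intro divide_left_mono) auto
    also have "(2 * Qb * gM / gm + 1) / gM \<ge> 2 * Qb / gm"
      using gMpos gm by (simp add: field_simps)
    finally show ?thesis by simp
  qed
  have qk: "AE x in lebesgue_on {x0..x1}. 0 \<le> q x / g x \<and> q x / g x \<le> k x / 2"
    using qb assms(9) AE_space
  proof eventually_elim
    case (elim x)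
    then have x: "x \<in> {x0..x1}" by simp
    have "q x / g x \<le> Qb / g x" using elim gpos[OF x] by (intro divide_right_mono) auto
    also have "\<dots> \<le> Qb / gm" using gpos[OF x] gm Qb0' x by (intro divide_left_mono) auto
    also have "\<dots> \<le> k x / 2" using klow[OF x] by (simp add: mult.commute)
    finally show ?case using elim gpos[OF x] by auto
  qed
  have res: "complex_of_real \<mu> \<in> resolvent_set x0 x1 g w q"
    by (rule in_resolvent[OF ab gc gpos wc k_def kpos qm qb qk])
  show ?thesis
  proof (intro conjI ballI allI impI)
    show "resolvent_set x0 x1 g w q \<noteq> {}" using res by blast
    fix \<nu> R assume "\<nu> \<in> resolvent_set x0 x1 g w q" "resolvent_inverse x0 x1 g w q \<nu> R"
    then show "compact_L1_map x0 x1 R"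
      using compact_part[OF ab gc gpos wc qm qb] by blast
  qed
qed


end
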